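(* Let $W:[Q]^2\to([Q]\cup\{\phi\})^2$ be any function and $n\ge1$. If $s$ is the maximum size of a bipartite independent set in $G_{W,1}$, then the maximum size of a bipartite independent set in $G_{W,n}$ is $s^n$.
   Context: Fix an integer $q\ge1$, $Q=2^q$, $[Q]=\{1,\dots,Q\}$, and a symbol $\phi\notin[Q]$. $G_{W,n}$ is the bipartite graph whose two sides are two copies of $[Q]^n$, with $x^{(n)}=(x_1,\dots,x_n)$ (left) adjacent to $y^{(n)}=(y_1,\dots,y_n)$ (right) iff there is an index $i$ with $W(x_i,y_i)=(\phi,\phi)$. In a bipartite graph with sides $X,Y$, a bipartite independent set (BPIS) is a pair $(A,B)$ with $A\subseteq X$, $B\subseteq Y$ and no edge between $A$ and $B$; its size is $|A|\cdot|B|$. *)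

theory Defs
  imports Main
begin

(* [Q] = {1..Q}; the symbol phi is represented by None, an element a of [Q] by Some a.
   Vertices of G_{W,n} (on either side) are words of length n over [Q], as lists. *)

definition words :: "nat \<Rightarrow> nat \<Rightarrow> nat list set" where
  "words Q n = {xs. length xs = n \<and> set xs \<subseteq> {1..Q}}"

definition GW_adj :: "(nat \<Rightarrow> nat \<Rightarrow> nat option \<times> nat option) \<Rightarrow> nat \<Rightarrow> nat list \<Rightarrow> nat list \<Rightarrow> bool" where
  "GW_adj W n x y = (\<exists>i<n. W (x ! i) (y ! i) = (None, None))"

definition is_bpis :: "(nat \<Rightarrow> nat \<Rightarrow> nat option \<times> nat option) \<Rightarrow> nat \<Rightarrow> nat \<Rightarrow> nat list set \<Rightarrow> nat list set \<Rightarrow> bool" where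
  "is_bpis W Q n A B = (A \<subseteq> words Q n \<and> B \<subseteq> words Q n \<and> (\<forall>x\<in>A. \<forall>y\<in>B. \<not> GW_adj W n x y))"

definition max_bpis :: "(nat \<Rightarrow> nat \<Rightarrow> nat option \<times> nat option) \<Rightarrow> nat \<Rightarrow> nat \<Rightarrow> nat" where
  "max_bpis W Q n = Max {card A * card B | A B. is_bpis W Q n A B}"

end

theory Submission
  imports Defs
begin

definition prodset :: "(nat \<Rightarrow> 'a set) \<Rightarrow> nat \<Rightarrow> 'a list set" where
  "prodset P n = {xs. length xs = n \<and> (\<forall>i<n. xs!i \<in> P i)}"

lemma card_prodset:
  assumes "\<And>i. finite (P i)"
  shows "card (prodset P n) = (\<Prod>i<n. card (P i))"
  using assms
proof (induction n arbitrary: P)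
  case 0
  have "prodset P 0 = {[]}" by (auto simp: prodset_def)
  then show ?case by simp
next
  case (Suc n)
  have eq: "prodset P (Suc n) = (\<lambda>(x,xs). x#xs) ` (P 0 \<times> prodset (\<lambda>i. P (Suc i)) n)"
  proof (rule set_eqI)
    fix ys
    show "ys \<in> prodset P (Suc n) \<longleftrightarrow> ys \<in> (\<lambda>(x,xs). x#xs) ` (P 0 \<times> prodset (\<lambda>i. P (Suc i)) n)"
    proof
      assume h: "ys \<in> prodset P (Suc n)"
      then obtain x xs where ys: "ys = x#xs" by (cases ys) (auto simp: prodset_def)
      have "x \<in> P 0" using h ys by (auto simp: prodset_def)
      moreover have "xs \<in> prodset (\<lambda>i. P (Suc i)) n" using h ys by (auto simp: prodset_def)
      ultimately show "ys \<in> (\<lambda>(x,xs). x#xs) ` (P 0 \<times> prodset (\<lambda>i. P (Suc i)) n)"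
        using ys by force
    next
      assume "ys \<in> (\<lambda>(x,xs). x#xs) ` (P 0 \<times> prodset (\<lambda>i. P (Suc i)) n)"
      then obtain x xs where ys: "ys = x#xs" and "x \<in> P 0" "xs \<in> prodset (\<lambda>i. P (Suc i)) n" by auto
      then show "ys \<in> prodset P (Suc n)"
        by (auto simp: prodset_def less_Suc_eq_0_disj)
    qed
  qed
  have inj: "inj_on (\<lambda>(x,xs). x#xs) (P 0 \<times> prodset (\<lambda>i. P (Suc i)) n)"
    by (auto simp: inj_on_def)
  have "card (prodset P (Suc n)) = card (P 0) * card (prodset (\<lambda>i. P (Suc i)) n)"
    unfolding eq by (simp add: card_image[OF inj] card_cartesian_product)
  also have "\<dots> = card (P 0) * (\<Prod>i<n. card (P (Suc i)))"
    using Suc.IH[of "\<lambda>i. P (Suc i)"] Suc.prems by simp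
  also have "\<dots> = (\<Prod>i<Suc n. card (P i))"
    by (rule prod.lessThan_Suc_shift[symmetric])
  finally show ?case .
qed

lemma finite_words: "finite (words Q n)"
proof -
  have "words Q n \<subseteq> {xs. set xs \<subseteq> {1..Q} \<and> length xs = n}" by (auto simp: words_def)
  then show ?thesis using finite_lists_length_eq[of "{1..Q}" n] finite_subset by blast
qed

lemma fin_vals: "finite {card A * card B | A B. is_bpis W Q n A B}"
proof -
  have "{card A * card B | A B. is_bpis W Q n A B} \<subseteq> {..card (words Q n) * card (words Q n)}"
  proof
    fix v assume "v \<in> {card A * card B | A B. is_bpis W Q n A B}"
    then obtain A B where v: "v = card A * card B" and h: "is_bpis W Q n A B" by auto
    have "card A \<le> card (words Q n)" "card B \<le> card (words Q n)"
      using h finite_words by (auto simp: is_bpis_def intro: card_mono)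
    then show "v \<in> {..card (words Q n) * card (words Q n)}" using v by (simp add: mult_le_mono)
  qed
  then show ?thesis using finite_subset by blast
qed

lemma max_ge: "is_bpis W Q n A B \<Longrightarrow> card A * card B \<le> max_bpis W Q n"
  unfolding max_bpis_def using fin_vals by (intro Max_ge) auto

lemma max_att: "\<exists>A B. is_bpis W Q n A B \<and> max_bpis W Q n = card A * card B"
proof -
  have "is_bpis W Q n {} {}" by (simp add: is_bpis_def)
  then have ne: "{card A * card B | A B. is_bpis W Q n A B} \<noteq> {}" by blast
  have "max_bpis W Q n \<in> {card A * card B | A B. is_bpis W Q n A B}"
    unfolding max_bpis_def using Max_in[OF fin_vals ne] .
  then show ?thesis by auto
qed

lemma adj1: "GW_adj W 1 [a] [b] = (W a b = (None, None))"
  by (simp add: GW_adj_def)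

theorem mainTheorem6:
  fixes q n s :: nat and W :: "nat \<Rightarrow> nat \<Rightarrow> nat option \<times> nat option"
  assumes "q \<ge> 1" and "n \<ge> 1"
    and "\<And>x y. x \<in> {1..2^q} \<Longrightarrow> y \<in> {1..2^q} \<Longrightarrow>
           (\<forall>a. fst (W x y) = Some a \<longrightarrow> a \<in> {1..2^q}) \<and> (\<forall>b. snd (W x y) = Some b \<longrightarrow> b \<in> {1..2^q})"
    and "s = max_bpis W (2^q) 1"
  shows "max_bpis W (2^q) n = s ^ n"
proof -
  define Q :: nat where "Q = 2^q"
  have sdef: "s = max_bpis W Q 1" using assms(4) by (simp add: Q_def)
  show ?thesis unfolding Q_def[symmetric]
  proof (rule antisym)
    obtain A B where AB: "is_bpis W Q n A B" and mx: "max_bpis W Q n = card A * card B"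
      using max_att by blast
    define PA where "PA i = {x!i | x. x \<in> A}" for i
    define PB where "PB i = {x!i | x. x \<in> B}" for i
    have PAQ: "PA i \<subseteq> {1..Q}" if "i < n" for i
    proof
      fix a assume "a \<in> PA i"
      then obtain x where "x \<in> A" "a = x!i" by (auto simp: PA_def)
      moreover have "x!i \<in> set x" using \<open>x \<in> A\<close> AB that by (auto simp: is_bpis_def words_def)
      moreover have "set x \<subseteq> {1..Q}" using \<open>x \<in> A\<close> AB by (auto simp: is_bpis_def words_def)
      ultimately show "a \<in> {1..Q}" by blast
    qed
    have PBQ: "PB i \<subseteq> {1..Q}" if "i < n" for i
    proof
      fix a assume "a \<in> PB i"
      then obtain x where "x \<in> B" "a = x!i" by (auto simp: PB_def)
      moreover have "x!i \<in> set x" using \<open>x \<in> B\<close> AB that by (auto simp: is_bpis_def words_def)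
      moreover have "set x \<subseteq> {1..Q}" using \<open>x \<in> B\<close> AB by (auto simp: is_bpis_def words_def)
      ultimately show "a \<in> {1..Q}" by blast
    qed
    define PA' where "PA' i = (if i < n then PA i else {})" for i
    define PB' where "PB' i = (if i < n then PB i else {})" for i
    have finA: "finite (PA' i)" for i
      using PAQ by (auto simp: PA'_def intro: finite_subset)
    have finB: "finite (PB' i)" for i
      using PBQ by (auto simp: PB'_def intro: finite_subset)
    have bound: "card (PA' i) * card (PB' i) \<le> s" if "i < n" for i
    proof -
      have inj: "inj (\<lambda>a::nat. [a])" by (auto simp: inj_def)
      have "is_bpis W Q 1 ((\<lambda>a. [a]) ` PA i) ((\<lambda>a. [a]) ` PB i)"
        unfolding is_bpis_def
      proof (intro conjI ballI)
        show "(\<lambda>a. [a]) ` PA i \<subseteq> words Q 1" using PAQ[OF that] by (auto simp: words_def)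
        show "(\<lambda>a. [a]) ` PB i \<subseteq> words Q 1" using PBQ[OF that] by (auto simp: words_def)
        fix u v assume "u \<in> (\<lambda>a. [a]) ` PA i" "v \<in> (\<lambda>a. [a]) ` PB i"
        then obtain x y where x: "x \<in> A" and y: "y \<in> B" and u: "u = [x!i]" and v: "v = [y!i]"
          by (auto simp: PA_def PB_def)
        have "\<not> GW_adj W n x y" using AB x y by (auto simp: is_bpis_def)
        then have "W (x!i) (y!i) \<noteq> (None, None)" using that by (auto simp: GW_adj_def)
        then show "\<not> GW_adj W 1 u v" using u v adj1 by simp
      qed
      then have "card ((\<lambda>a. [a]) ` PA i) * card ((\<lambda>a. [a]) ` PB i) \<le> s"
        using max_ge sdef by metis
      then show ?thesis using that by (simp add: PA'_def PB'_def card_image[OF inj_on_subset[OF inj]])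
    qed
    have subA: "A \<subseteq> prodset PA' n"
      using AB by (auto simp: prodset_def PA'_def PA_def is_bpis_def words_def)
    have subB: "B \<subseteq> prodset PB' n"
      using AB by (auto simp: prodset_def PB'_def PB_def is_bpis_def words_def)
    have fpA: "finite (prodset PA' n)"
      by (rule finite_subset[OF _ finite_words[of Q n]])
         (use PAQ in \<open>auto simp: prodset_def words_def PA'_def set_conv_nth\<close>)
    have fpB: "finite (prodset PB' n)"
      by (rule finite_subset[OF _ finite_words[of Q n]])
         (use PBQ in \<open>auto simp: prodset_def words_def PB'_def set_conv_nth\<close>)
    have "card A * card B \<le> card (prodset PA' n) * card (prodset PB' n)"
      using card_mono[OF fpA subA] card_mono[OF fpB subB] by (rule mult_le_mono)
    also have "\<dots> = (\<Prod>i<n. card (PA' i) * card (PB' i))"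
      using card_prodset[of PA' n, OF finA] card_prodset[of PB' n, OF finB]
      by (simp add: prod.distrib)
    also have "\<dots> \<le> (\<Prod>i<n. s)"
      by (rule prod_mono) (use bound in auto)
    also have "\<dots> = s ^ n" by simp
    finally show "max_bpis W Q n \<le> s ^ n" using mx by simp
  next
    obtain A1 B1 where AB: "is_bpis W Q 1 A1 B1" and mx: "s = card A1 * card B1"
      using max_att sdef by metis
    define a1 where "a1 = {a. [a] \<in> A1}"
    define b1 where "b1 = {a. [a] \<in> B1}"
    have A1eq: "A1 = (\<lambda>a. [a]) ` a1"
    proof (rule set_eqI)
      fix u show "u \<in> A1 \<longleftrightarrow> u \<in> (\<lambda>a. [a]) ` a1"
      proof
        assume u: "u \<in> A1"
        then have "length u = 1" using AB by (auto simp: is_bpis_def words_def)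
        then obtain a where "u = [a]" by (cases u) auto
        then show "u \<in> (\<lambda>a. [a]) ` a1" using u by (auto simp: a1_def)
      qed (auto simp: a1_def)
    qed
    have B1eq: "B1 = (\<lambda>a. [a]) ` b1"
    proof (rule set_eqI)
      fix u show "u \<in> B1 \<longleftrightarrow> u \<in> (\<lambda>a. [a]) ` b1"
      proof
        assume u: "u \<in> B1"
        then have "length u = 1" using AB by (auto simp: is_bpis_def words_def)
        then obtain a where "u = [a]" by (cases u) auto
        then show "u \<in> (\<lambda>a. [a]) ` b1" using u by (auto simp: b1_def)
      qed (auto simp: b1_def)
    qed
    have inj: "inj (\<lambda>a::nat. [a])" by (auto simp: inj_def)
    have ca: "card A1 = card a1" unfolding A1eq by (rule card_image[OF inj_on_subset[OF inj]]) auto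
    have cb: "card B1 = card b1" unfolding B1eq by (rule card_image[OF inj_on_subset[OF inj]]) auto
    have a1Q: "a1 \<subseteq> {1..Q}" using AB by (auto simp: a1_def is_bpis_def words_def)
    have b1Q: "b1 \<subseteq> {1..Q}" using AB by (auto simp: b1_def is_bpis_def words_def)
    have fa: "finite a1" using a1Q finite_subset by blast
    have fb: "finite b1" using b1Q finite_subset by blast
    define An where "An = {xs. set xs \<subseteq> a1 \<and> length xs = n}"
    define Bn where "Bn = {xs. set xs \<subseteq> b1 \<and> length xs = n}"
    have "is_bpis W Q n An Bn"
      unfolding is_bpis_def
    proof (intro conjI ballI)
      show "An \<subseteq> words Q n" using a1Q by (auto simp: An_def words_def)
      show "Bn \<subseteq> words Q n" using b1Q by (auto simp: Bn_def words_def)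
      fix x y assume x: "x \<in> An" and y: "y \<in> Bn"
      show "\<not> GW_adj W n x y"
        unfolding GW_adj_def
      proof (intro notI, elim exE conjE)
        fix i assume i: "i < n" and w: "W (x!i) (y!i) = (None, None)"
        have "x!i \<in> a1" using x i nth_mem[of i x] by (auto simp: An_def)
        moreover have "y!i \<in> b1" using y i nth_mem[of i y] by (auto simp: Bn_def)
        ultimately have "\<not> GW_adj W 1 [x!i] [y!i]" using AB by (auto simp: is_bpis_def a1_def b1_def)
        then show False using w adj1 by simp
      qed
    qed
    then have "card An * card Bn \<le> max_bpis W Q n" by (rule max_ge)
    moreover have "card An * card Bn = s ^ n"
      using card_lists_length_eq[OF fa, of n] card_lists_length_eq[OF fb, of n] mx ca cb
      by (simp add: An_def Bn_def power_mult_distrib)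
    ultimately show "s ^ n \<le> max_bpis W Q n" by simp
  qed
qed

end
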